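(* Let $I\subset\mathbb R$ be an open interval, $r:I\to\mathbb R$ a smooth positive function, $C\neq 0$ a constant, $\eta\in\{1,-1\}$, and fix one choice of sign $\pm$. Assume that $$R(u):=(r r''+(r')^2+1)^2 \pm 4C^2 r^2\,(1+(r')^2)>0 \quad\text{on } I.$$ Let $\varphi:I\to\mathbb R$ be any function with $$\varphi'(u)=\eta\,\frac{\sqrt{R(u)}}{r(u)\,(1+r'(u)^2)},$$ and let $x_1,x_2:I\to\mathbb R$ be any functions with $$x_1'(u)=\sqrt{1+r'(u)^2}\,\cos\varphi(u),\qquad x_2'(u)=\sqrt{1+r'(u)^2}\,\sin\varphi(u).$$ Then $c(u)=(x_1(u),x_2(u),r(u),0)$ is a spacelike curve parameterized by arc-length with $x_1'x_2''-x_1''x_2'\neq 0$ on $I$, and the rotational surface of elliptic type $z(u,v)=(x_1(u),x_2(u),r(u)\cos v,r(u)\sin v)$ generated by $c$ is a Lorentz surface in $\mathbb E^4_2$ with constant mean curvature, namely $\langle H,H\rangle=\pm C^2$ (the same sign as chosen in $R$). Conversely, let $z(u,v)=(x_1(u),x_2(u),r(u)\cos v,r(u)\sin v)$, $u\in J$, $v\in[0,2\pi)$, be a rotational surface of elliptic type whose generating curve $(x_1,x_2,r,0)$ is spacelike, parameterized by arc-length ($(x_1')^2+(x_2')^2-(r')^2=1$), with $r>0$, and suppose $x_1'x_2''-x_1''x_2'\neq0$ on an open interval $I\subset J$ and the surface has constant mean curvature ($\langle H,H\rangle$ a nonzero constant) on $I$. Then on $I$ the functions $x_1,x_2$ arise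 from $r$ exactly by the construction above for some constant $C\neq0$, some sign $\pm$, some $\eta\in\{\pm1\}$ and suitable constants of integration.
   Context: $\mathbb E^4_2$ is $\mathbb R^4$ with the neutral metric $\langle\cdot,\cdot\rangle$ given by $g_0=dx_1^2+dx_2^2-dx_3^2-dx_4^2$. A vector $v$ is spacelike if $\langle v,v\rangle>0$, timelike if $\langle v,v\rangle<0$. A surface in $\mathbb E^4_2$ is Lorentz if its induced metric has signature $(1,1)$ (then its normal space also has signature $(1,1)$). For a surface with second fundamental form $\sigma$, the mean curvature vector is $H=\frac12\operatorname{tr}\sigma$ (trace with respect to the induced metric); the surface is said to have constant mean curvature if $\langle H,H\rangle$ is a nonzero constant. A rotational surface of elliptic type is a surface $z(u,v)=(x_1(u),x_2(u),r(u)\cos v,r(u)\sin v)$ obtained by rotating a curve $(x_1(u),x_2(u),r(u),0)$ with $r>0$ about the plane spanned by $e_1=(1,0,0,0)$ and $e_2=(0,1,0,0)$. *)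

theory Defs
  imports "HOL-Analysis.Analysis"
begin

definition nip :: "real^4 \<Rightarrow> real^4 \<Rightarrow> real" where
  "nip a b = a$1 * b$1 + a$2 * b$2 - a$3 * b$3 - a$4 * b$4"

definition smooth_on :: "(real \<Rightarrow> real) \<Rightarrow> real set \<Rightarrow> bool" where
  "smooth_on f S \<longleftrightarrow> (\<forall>k. \<forall>u\<in>S. ((deriv ^^ k) f) differentiable (at u))"

definition open_interval :: "real set \<Rightarrow> bool" where
  "open_interval I \<longleftrightarrow> is_interval I \<and> open I \<and> I \<noteq> {}"

definition rot_surf :: "(real \<Rightarrow> real) \<Rightarrow> (real \<Rightarrow> real) \<Rightarrow> (real \<Rightarrow> real)
    \<Rightarrow> real \<Rightarrow> real \<Rightarrow> real^4" where
  "rot_surf x1 x2 r u v = vector [x1 u, x2 u, r u * cos v, r u * sin v]"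

definition gen_curve :: "(real \<Rightarrow> real) \<Rightarrow> (real \<Rightarrow> real) \<Rightarrow> (real \<Rightarrow> real)
    \<Rightarrow> real \<Rightarrow> real^4" where
  "gen_curve x1 x2 r u = vector [x1 u, x2 u, r u, 0]"

definition pu :: "(real \<Rightarrow> real \<Rightarrow> real^4) \<Rightarrow> real \<Rightarrow> real \<Rightarrow> real^4" where
  "pu z u v = vector_derivative (\<lambda>t. z t v) (at u)"

definition pv :: "(real \<Rightarrow> real \<Rightarrow> real^4) \<Rightarrow> real \<Rightarrow> real \<Rightarrow> real^4" where
  "pv z u v = vector_derivative (\<lambda>t. z u t) (at v)"

definition fE where "fE z u v = nip (pu z u v) (pu z u v)"
definition fF where "fF z u v = nip (pu z u v) (pv z u v)"
definition fG where "fG z u v = nip (pv z u v) (pv z u v)"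

text \<open>Lorentz surface at (u,v): the induced metric on the tangent plane
  spanned by z_u, z_v has signature (1,1), i.e. there is an orthogonal basis
  of the tangent plane consisting of a spacelike and a timelike vector.\<close>
definition lorentz_at :: "(real \<Rightarrow> real \<Rightarrow> real^4) \<Rightarrow> real \<Rightarrow> real \<Rightarrow> bool" where
  "lorentz_at z u v \<longleftrightarrow> (\<exists>a b c d.
     let e1 = a *\<^sub>R pu z u v + b *\<^sub>R pv z u v;
         e2 = c *\<^sub>R pu z u v + d *\<^sub>R pv z u v
     in nip e1 e1 > 0 \<and> nip e2 e2 < 0 \<and> nip e1 e2 = 0)"

text \<open>Normal component of a vector w with respect to the tangent plane at (u,v)
  (orthogonal projection w.r.t. the neutral metric).\<close>
definition nrm :: "(real \<Rightarrow> real \<Rightarrow> real^4) \<Rightarrow> real \<Rightarrow> real \<Rightarrow> real^4 \<Rightarrow> real^4" where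
  "nrm z u v w =
    (let E = fE z u v; F = fF z u v; G = fG z u v; D = E * G - F^2;
         p = nip w (pu z u v); q = nip w (pv z u v);
         a = (G * p - F * q) / D; b = (E * q - F * p) / D
     in w - (a *\<^sub>R pu z u v + b *\<^sub>R pv z u v))"

text \<open>Mean curvature vector H = (1/2) tr sigma, where
  sigma(z_i,z_j) = normal part of z_ij and the trace is with respect to the induced metric.\<close>
definition mean_curv :: "(real \<Rightarrow> real \<Rightarrow> real^4) \<Rightarrow> real \<Rightarrow> real \<Rightarrow> real^4" where
  "mean_curv z u v =
    (let E = fE z u v; F = fF z u v; G = fG z u v; D = E * G - F^2;
         suu = nrm z u v (pu (pu z) u v);
         suv = nrm z u v (pv (pu z) u v);
         svv = nrm z u v (pv (pv z) u v)
     in (1 / (2 * D)) *\<^sub>R (G *\<^sub>R suu - (2 * F) *\<^sub>R suv + E *\<^sub>R svv))"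

text \<open>The function R(u); the sign +/- is encoded by s \<in> {1,-1}.\<close>
definition Rfun :: "real \<Rightarrow> real \<Rightarrow> (real \<Rightarrow> real) \<Rightarrow> real \<Rightarrow> real" where
  "Rfun s C r u = (r u * deriv (deriv r) u + (deriv r u)^2 + 1)^2
                  + s * 4 * C^2 * (r u)^2 * (1 + (deriv r u)^2)"

end

theory Submission
  imports Defs
begin


lemma vector_4 [simp]:
 "(vector [x,y,z,w] ::('a::zero)^4)$1 = x"
 "(vector [x,y,z,w] ::('a::zero)^4)$2 = y"
 "(vector [x,y,z,w] ::('a::zero)^4)$3 = z"
 "(vector [x,y,z,w] ::('a::zero)^4)$4 = w"
  unfolding vector_def by simp_all

lemma vec4_add[simp]: "vector [a,b,c,d] + vector [e,f,g,h] = (vector [a+e,b+f,c+g,d+h] :: real^4)"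
  by (simp add: vec_eq_iff forall_4)
lemma vec4_diff[simp]: "vector [a,b,c,d] - vector [e,f,g,h] = (vector [a-e,b-f,c-g,d-h] :: real^4)"
  by (simp add: vec_eq_iff forall_4)
lemma vec4_scale[simp]: "k *\<^sub>R vector [a,b,c,d] = (vector [k*a,k*b,k*c,k*d] :: real^4)"
  by (simp add: vec_eq_iff forall_4)
lemma nip_vec4[simp]: "nip (vector [a,b,c,d]) (vector [e,f,g,h]) = a*e+b*f-c*g-d*h"
  by (simp add: nip_def)

lemma vec4_decomp: "(vector [a,b,c,d] :: real^4) = a *\<^sub>R vector [1,0,0,0] + b *\<^sub>R vector [0,1,0,0]
   + c *\<^sub>R vector [0,0,1,0] + d *\<^sub>R vector [0,0,0,1]"
  by simp

lemma has_vd_scale_const: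
  assumes "(f has_real_derivative a) (at x within S)"
  shows "((\<lambda>t. f t *\<^sub>R (c::real^4)) has_vector_derivative a *\<^sub>R c) (at x within S)"
  using has_vector_derivative_scaleR[OF assms has_vector_derivative_const[of c]] by simp

lemma has_vd_vec4:
  assumes "(f1 has_real_derivative a) (at x within S)" "(f2 has_real_derivative b) (at x within S)"
    "(f3 has_real_derivative c) (at x within S)" "(f4 has_real_derivative d) (at x within S)"
  shows "((\<lambda>t. vector [f1 t, f2 t, f3 t, f4 t] :: real^4) has_vector_derivative vector [a,b,c,d]) (at x within S)"
proof -
  have "((\<lambda>t. f1 t *\<^sub>R (vector [1,0,0,0]::real^4) + f2 t *\<^sub>R vector [0,1,0,0]
   + f3 t *\<^sub>R vector [0,0,1,0] + f4 t *\<^sub>R vector [0,0,0,1]) has_vector_derivative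
     (a *\<^sub>R vector [1,0,0,0] + b *\<^sub>R vector [0,1,0,0]
   + c *\<^sub>R vector [0,0,1,0] + d *\<^sub>R vector [0,0,0,1])) (at x within S)"
    by (intro has_vector_derivative_add has_vd_scale_const assms)
  then show ?thesis by (simp only: vec4_decomp[symmetric])
qed


lemma pu_rot:
  assumes "x1 differentiable at u" "x2 differentiable at u" "r differentiable at u"
  shows "pu (rot_surf x1 x2 r) u v = vector [deriv x1 u, deriv x2 u, deriv r u * cos v, deriv r u * sin v]"
  unfolding pu_def rot_surf_def
  by (rule vector_derivative_at, rule has_vd_vec4)
     (use assms in \<open>auto intro!: derivative_eq_intros simp: DERIV_deriv_iff_real_differentiable\<close>)

lemma pv_rot: "pv (rot_surf x1 x2 r) u v = vector [0, 0, -(r u * sin v), r u * cos v]"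
  unfolding pv_def rot_surf_def
  by (rule vector_derivative_at, rule has_vd_vec4) (auto intro!: derivative_eq_intros)

lemma pvpv_rot: "pv (pv (rot_surf x1 x2 r)) u v = vector [0, 0, -(r u * cos v), -(r u * sin v)]"
  unfolding pv_def[of "pv _"] pv_rot
  by (rule vector_derivative_at, rule has_vd_vec4) (auto intro!: derivative_eq_intros)

lemma pvpu_rot:
  assumes "x1 differentiable at u" "x2 differentiable at u" "r differentiable at u"
  shows "pv (pu (rot_surf x1 x2 r)) u v = vector [0, 0, -(deriv r u * sin v), deriv r u * cos v]"
  unfolding pv_def[of "pu _"] pu_rot[OF assms]
  by (rule vector_derivative_at, rule has_vd_vec4) (auto intro!: derivative_eq_intros)

lemma pupu_rot:
  assumes "open S" "u \<in> S" "\<And>t. t \<in> S \<Longrightarrow> x1 differentiable at t \<and> x2 differentiable at t \<and> r differentiable at t"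
   "deriv x1 differentiable at u" "deriv x2 differentiable at u" "deriv r differentiable at u"
  shows "pu (pu (rot_surf x1 x2 r)) u v = vector [deriv (deriv x1) u, deriv (deriv x2) u,
            deriv (deriv r) u * cos v, deriv (deriv r) u * sin v]"
proof -
  have "((\<lambda>t. vector [deriv x1 t, deriv x2 t, deriv r t * cos v, deriv r t * sin v] :: real^4) has_vector_derivative
     vector [deriv (deriv x1) u, deriv (deriv x2) u,
            deriv (deriv r) u * cos v, deriv (deriv r) u * sin v]) (at u)"
    by (rule has_vd_vec4)
     (use assms in \<open>auto intro!: derivative_eq_intros simp: DERIV_deriv_iff_real_differentiable\<close>)
  then have "((\<lambda>t. pu (rot_surf x1 x2 r) t v) has_vector_derivative
     vector [deriv (deriv x1) u, deriv (deriv x2) u,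
            deriv (deriv r) u * cos v, deriv (deriv r) u * sin v]) (at u)"
    by (rule has_vector_derivative_transform_within_open[OF _ assms(1,2)])
      (use assms(3) in \<open>simp add: pu_rot\<close>)
  then show ?thesis unfolding pu_def[of "pu _"] by (rule vector_derivative_at)
qed


lemma orth_deriv:
  fixes f g h :: "real \<Rightarrow> real"
  assumes "open S" "u \<in> S" "\<And>t. t \<in> S \<Longrightarrow> (f t)^2 + (g t)^2 - (h t)^2 = 1"
    "f differentiable at u" "g differentiable at u" "h differentiable at u"
  shows "f u * deriv f u + g u * deriv g u - h u * deriv h u = 0"
proof -
  have D: "((\<lambda>t. (f t)^2 + (g t)^2 - (h t)^2) has_real_derivative
     2 * (f u * deriv f u + g u * deriv g u - h u * deriv h u)) (at u)"
    using assms(4-6)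
    by (auto intro!: derivative_eq_intros simp: DERIV_deriv_iff_real_differentiable[symmetric] algebra_simps)
  have "((\<lambda>t. 1::real) has_real_derivative 0) (at u)" by simp
  then have D0: "((\<lambda>t. (f t)^2 + (g t)^2 - (h t)^2) has_real_derivative 0) (at u)"
    by (rule has_field_derivative_transform_within_open[OF _ assms(1,2)]) (use assms(3) in auto)
  from DERIV_unique[OF D D0] show ?thesis by simp
qed

lemma core:
  fixes x1 x2 r :: "real \<Rightarrow> real"
  assumes "open S" "u \<in> S" "\<And>t. t \<in> S \<Longrightarrow> x1 differentiable at t \<and> x2 differentiable at t \<and> r differentiable at t"
   "deriv x1 differentiable at u" "deriv x2 differentiable at u" "deriv r differentiable at u"
   "r u > 0" "\<And>t. t \<in> S \<Longrightarrow> (deriv x1 t)^2 + (deriv x2 t)^2 - (deriv r t)^2 = 1"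
  shows "lorentz_at (rot_surf x1 x2 r) u v \<and>
    nip (mean_curv (rot_surf x1 x2 r) u v) (mean_curv (rot_surf x1 x2 r) u v) =
     ((deriv (deriv x1) u + deriv r u * deriv x1 u / r u)^2 + (deriv (deriv x2) u + deriv r u * deriv x2 u / r u)^2
      - (deriv (deriv r) u + (1 + (deriv r u)^2) / r u)^2) / 4"
proof -
  define z where "z = rot_surf x1 x2 r"
  define X1 where "X1 = deriv x1 u"
  define X2 where "X2 = deriv x2 u"
  define R1 where "R1 = deriv r u"
  define X1d where "X1d = deriv (deriv x1) u"
  define X2d where "X2d = deriv (deriv x2) u"
  define R2 where "R2 = deriv (deriv r) u"
  define r0 where "r0 = r u"
  define c where "c = cos v"
  define s where "s = sin v"
  have cs: "c^2 + s^2 = 1" unfolding c_def s_def by simp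
  have r0: "r0 > 0" using assms(7) r0_def by simp
  have E1: "X1^2 + X2^2 - R1^2 = 1" using assms(8)[OF assms(2)] X1_def X2_def R1_def by simp
  have orth: "X1 * X1d + X2 * X2d - R1 * R2 = 0"
    unfolding X1_def X2_def R1_def X1d_def X2d_def R2_def
    by (rule orth_deriv[OF assms(1,2) assms(8) assms(4-6)])
  have d: "\<And>t. t \<in> S \<Longrightarrow> x1 differentiable at t" "\<And>t. t \<in> S \<Longrightarrow> x2 differentiable at t"
     "\<And>t. t \<in> S \<Longrightarrow> r differentiable at t" using assms(3) by auto
  have zu: "pu z u v = vector [X1, X2, R1 * c, R1 * s]"
    unfolding z_def X1_def X2_def R1_def c_def s_def by (rule pu_rot) (use d assms(2) in auto)
  have zv: "pv z u v = vector [0, 0, -(r0 * s), r0 * c]"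
    unfolding z_def r0_def c_def s_def by (rule pv_rot)
  have zvv: "pv (pv z) u v = vector [0, 0, -(r0 * c), -(r0 * s)]"
    unfolding z_def r0_def c_def s_def by (rule pvpv_rot)
  have zuv: "pv (pu z) u v = vector [0, 0, -(R1 * s), R1 * c]"
    unfolding z_def R1_def c_def s_def by (rule pvpu_rot) (use d assms(2) in auto)
  have zuu: "pu (pu z) u v = vector [X1d, X2d, R2 * c, R2 * s]"
    unfolding z_def X1d_def X2d_def R2_def c_def s_def by (rule pupu_rot[OF assms(1-6)])
  have E: "fE z u v = 1" unfolding fE_def zu using E1 cs
    by simp algebra
  have F: "fF z u v = 0" unfolding fF_def zu zv by (simp add: algebra_simps)
  have G: "fG z u v = -(r0^2)" unfolding fG_def zv using cs
    by simp algebra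
  have suu: "nrm z u v (pu (pu z) u v) = vector [X1d, X2d, R2 * c, R2 * s]"
  proof -
    have "nip (pu (pu z) u v) (pu z u v) = 0" unfolding zuu zu using orth cs
      by simp algebra
    moreover have "nip (pu (pu z) u v) (pv z u v) = 0" unfolding zuu zv by (simp add: algebra_simps)
    ultimately show ?thesis unfolding nrm_def Let_def E F G zuu by simp
  qed
  have svv: "nrm z u v (pv (pv z) u v) = vector [- r0 * R1 * X1, - r0 * R1 * X2, -(r0 * c) - r0 * R1^2 * c, -(r0 * s) - r0 * R1^2 * s]"
  proof -
    have "nip (pv (pv z) u v) (pu z u v) = r0 * R1" unfolding zvv zu using cs
      by simp algebra
    moreover have "nip (pv (pv z) u v) (pv z u v) = 0" unfolding zvv zv by (simp add: algebra_simps)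
    ultimately show ?thesis unfolding nrm_def Let_def E F G zvv zu using r0
      by (simp add: field_simps power2_eq_square)
  qed
  have H: "mean_curv z u v = vector [(X1d + R1 * X1 / r0)/2, (X2d + R1 * X2 / r0)/2,
      (R2 + (1 + R1^2)/r0) * c / 2, (R2 + (1 + R1^2)/r0) * s / 2]"
    unfolding mean_curv_def Let_def E F G suu svv using r0
    by (simp add: vec_eq_iff forall_4 field_simps power2_eq_square)
  have L: "lorentz_at z u v"
    unfolding lorentz_at_def Let_def
    by (rule exI[of _ 1], rule exI[of _ 0], rule exI[of _ 0], rule exI[of _ 1])
      (use E F G r0 in \<open>simp add: fE_def fF_def fG_def\<close>)
  have N: "nip (mean_curv z u v) (mean_curv z u v) = ((X1d + R1 * X1 / r0)^2 + (X2d + R1 * X2 / r0)^2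
      - (R2 + (1 + R1^2)/r0)^2) / 4"
    unfolding H using cs by simp algebra
  show ?thesis using L N unfolding z_def X1_def X2_def R1_def X1d_def X2d_def R2_def r0_def by simp
qed



lemma key_aux:
  fixes X1 X2 X1d X2d R1 R2 r0 :: real
  assumes "X1^2 + X2^2 = 1 + R1^2" "X1*X1d + X2*X2d = R1*R2"
  shows "((r0*X1d + R1*X1)^2 + (r0*X2d + R1*X2)^2 - (r0*R2 + 1 + R1^2)^2) * (1+R1^2)
     = r0^2 * (X1*X2d - X1d*X2)^2 - (r0*R2 + R1^2 + 1)^2"
proof -
  have lag: "(X1^2+X2^2)*(X1d^2+X2d^2) = (X1*X2d - X1d*X2)^2 + (X1*X1d+X2*X2d)^2"
    by (simp add: power2_eq_square algebra_simps)
  have S: "(r0*X1d + R1*X1)^2 + (r0*X2d + R1*X2)^2 = r0^2*(X1d^2+X2d^2) + 2*r0*R1*(X1*X1d+X2*X2d) + R1^2*(X1^2+X2^2)"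
    by (simp add: power2_eq_square algebra_simps)
  define Q where "Q = X1d^2+X2d^2"
  define W where "W = X1*X2d - X1d*X2"
  have lag2: "(1+R1^2)*Q = W^2 + (R1*R2)^2" using lag assms unfolding Q_def W_def by simp
  have "((r0*X1d + R1*X1)^2 + (r0*X2d + R1*X2)^2 - (r0*R2 + 1 + R1^2)^2) * (1+R1^2)
     = (r0^2*Q + 2*r0*R1*(R1*R2) + R1^2*(1+R1^2) - (r0*R2 + 1 + R1^2)^2) * (1+R1^2)"
    unfolding S using assms unfolding Q_def by simp
  also have "\<dots> = r0^2 * ((1+R1^2)*Q) + (2*r0*R1*(R1*R2) + R1^2*(1+R1^2) - (r0*R2 + 1 + R1^2)^2) * (1+R1^2)"
    by (simp add: algebra_simps)
  also have "\<dots> = r0^2 * W^2 - (r0*R2 + R1^2 + 1)^2"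
    unfolding lag2 by (simp add: power2_eq_square algebra_simps)
  finally show ?thesis unfolding W_def .
qed

lemma key_identity:
  fixes X1 X2 X1d X2d R1 R2 r0 :: real
  assumes "X1^2 + X2^2 = 1 + R1^2" "X1*X1d + X2*X2d = R1*R2" "r0 > 0"
  shows "4 * (((X1d + R1*X1/r0)^2 + (X2d + R1*X2/r0)^2 - (R2 + (1+R1^2)/r0)^2)/4) * r0^2 * (1+R1^2)
     = r0^2 * (X1*X2d - X1d*X2)^2 - (r0*R2 + R1^2 + 1)^2"
proof -
  have h1: "4 * (((X1d + R1*X1/r0)^2 + (X2d + R1*X2/r0)^2 - (R2 + (1+R1^2)/r0)^2)/4) * r0^2
     = (r0*X1d + R1*X1)^2 + (r0*X2d + R1*X2)^2 - (r0*R2 + 1 + R1^2)^2"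
    using assms(3) by (simp add: field_simps power2_eq_square)
  moreover have h2: "((r0*X1d + R1*X1)^2 + (r0*X2d + R1*X2)^2 - (r0*R2 + 1 + R1^2)^2) * (1+R1^2)
     = r0^2 * (X1*X2d - X1d*X2)^2 - (r0*R2 + R1^2 + 1)^2"
    using assms(1,2) by (rule key_aux)
  ultimately show ?thesis by (simp only: h1 h2)
qed

lemma smooth_D:
  assumes "smooth_on f S" "u \<in> S"
  shows "f differentiable at u" "deriv f differentiable at u" "deriv (deriv f) differentiable at u"
proof -
  have "\<forall>k. ((deriv ^^ k) f) differentiable (at u)" using assms unfolding smooth_on_def by blast
  from this[rule_format, of 0] this[rule_format, of 1] this[rule_format, of 2]
  show "f differentiable at u" "deriv f differentiable at u" "deriv (deriv f) differentiable at u"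
    by (simp_all add: numeral_2_eq_2)
qed



lemma open_interval_ereal:
  assumes "open_interval I"
  shows "\<exists>a b::ereal. a < b \<and> (\<forall>x. x \<in> I \<longleftrightarrow> a < ereal x \<and> ereal x < b)"
proof -
  from assms have iv: "is_interval I" "open I" "I \<noteq> {}" unfolding open_interval_def by auto
  define a where "a = Inf (ereal ` I)"
  define b where "b = Sup (ereal ` I)"
  have L: "x \<in> I \<Longrightarrow> a < ereal x \<and> ereal x < b" for x
  proof -
    assume x: "x \<in> I"
    obtain e where e: "e > 0" "ball x e \<subseteq> I" using iv(2) x open_contains_ball by blast
    have "x - e/2 \<in> I" "x + e/2 \<in> I" using e by (auto simp: dist_real_def intro!: subsetD[OF e(2)])
    then have "a \<le> ereal (x - e/2)" "ereal (x + e/2) \<le> b" unfolding a_def b_def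
      by (auto intro: Inf_lower Sup_upper)
    moreover have "ereal (x - e/2) < ereal x" "ereal x < ereal (x + e/2)" using e(1) by auto
    ultimately show ?thesis by (meson order.strict_trans1 order.strict_trans2)
  qed
  have R: "a < ereal x \<Longrightarrow> ereal x < b \<Longrightarrow> x \<in> I" for x
  proof -
    assume "a < ereal x" "ereal x < b"
    then have "\<exists>y\<in>ereal ` I. y < ereal x" "\<exists>z\<in>ereal ` I. ereal x < z"
      unfolding a_def b_def Inf_less_iff less_Sup_iff by blast+
    then obtain y z where "y \<in> I" "ereal y < ereal x" "z \<in> I" "ereal x < ereal z"
      by blast
    then have "y \<in> I" "z \<in> I" "y \<le> x" "x \<le> z" by auto
    then show "x \<in> I" using iv(1) unfolding is_interval_1 by blast
  qed
  obtain x where "x \<in> I" using iv(3) by auto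
  with L have "a < b" by (meson order.strict_trans)
  with L R show ?thesis by blast
qed



lemma sign_const:
  fixes W :: "real \<Rightarrow> real"
  assumes "is_interval I" "continuous_on I W" "\<And>u. u \<in> I \<Longrightarrow> W u \<noteq> 0" "u0 \<in> I" "u \<in> I"
  shows "sgn (W u) = sgn (W u0)"
proof -
  have "connected (W ` I)" by (rule connected_continuous_image[OF assms(2) is_interval_connected[OF assms(1)]])
  then have c: "\<And>x y z. x \<in> W ` I \<Longrightarrow> y \<in> W ` I \<Longrightarrow> x \<le> z \<Longrightarrow> z \<le> y \<Longrightarrow> z \<in> W ` I"
    unfolding connected_iff_interval by blast
  have Wu: "W u \<in> W ` I" "W u0 \<in> W ` I" using assms(4,5) by auto
  have n0: "0 \<notin> W ` I" using assms(3) by auto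
  have 1: "\<not> (W u < 0 \<and> W u0 > 0)" using c[OF Wu(1) Wu(2), of 0] n0 by auto
  have 2: "\<not> (W u > 0 \<and> W u0 < 0)" using c[OF Wu(2) Wu(1), of 0] n0 by auto
  have "W u \<noteq> 0" "W u0 \<noteq> 0" using assms(3)[OF assms(4)] assms(3)[OF assms(5)] by auto
  with 1 2 show ?thesis by (simp add: sgn_real_def) linarith
qed



lemma cancel_aux: "(b::real) \<noteq> 0 \<Longrightarrow> b * (x / (r * b)) = x / r"
  by (cases "r = 0") (simp_all add: field_simps)

lemma forward_pt:
  fixes r x1 x2 \<phi> :: "real \<Rightarrow> real"
  assumes I: "open I" and u: "u \<in> I" and sm: "smooth_on r I" and rpos: "\<And>u. u\<in>I \<Longrightarrow> r u > 0"
    and eta: "\<eta> \<in> {1, -1}" and Rpos: "\<And>u. u\<in>I \<Longrightarrow> Rfun s C r u > 0"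
    and dphi: "\<And>u. u\<in>I \<Longrightarrow> (\<phi> has_real_derivative
                 \<eta> * sqrt (Rfun s C r u) / (r u * (1 + (deriv r u)^2))) (at u)"
    and dx1: "\<And>u. u\<in>I \<Longrightarrow> (x1 has_real_derivative sqrt (1 + (deriv r u)^2) * cos (\<phi> u)) (at u)"
    and dx2: "\<And>u. u\<in>I \<Longrightarrow> (x2 has_real_derivative sqrt (1 + (deriv r u)^2) * sin (\<phi> u)) (at u)"
  shows "nip (vector_derivative (gen_curve x1 x2 r) (at u))
             (vector_derivative (gen_curve x1 x2 r) (at u)) = 1 \<and>
         deriv x1 u * deriv (deriv x2) u - deriv (deriv x1) u * deriv x2 u \<noteq> 0 \<and>
         (\<forall>v. lorentz_at (rot_surf x1 x2 r) u v \<and>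
         nip (mean_curv (rot_surf x1 x2 r) u v) (mean_curv (rot_surf x1 x2 r) u v) = s * C^2)"
proof -
  define A where "A t = sqrt (1 + (deriv r t)^2)" for t
  define \<Phi> where "\<Phi> = \<eta> * sqrt (Rfun s C r u) / (r u * (1 + (deriv r u)^2))"
  define R1 where "R1 = deriv r u"
  define R2 where "R2 = deriv (deriv r) u"
  have rdiff: "\<And>t. t \<in> I \<Longrightarrow> r differentiable at t" "\<And>t. t \<in> I \<Longrightarrow> deriv r differentiable at t"
    using smooth_D[OF sm] by auto
  have Apos: "A t > 0" for t unfolding A_def by (simp add: add_pos_nonneg)
  have A2: "(A t)^2 = 1 + (deriv r t)^2" for t unfolding A_def by (simp add: add_nonneg_nonneg)
  have d1: "\<And>t. t \<in> I \<Longrightarrow> deriv x1 t = A t * cos (\<phi> t)"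
    using dx1 unfolding A_def by (simp add: DERIV_imp_deriv)
  have d2: "\<And>t. t \<in> I \<Longrightarrow> deriv x2 t = A t * sin (\<phi> t)"
    using dx2 unfolding A_def by (simp add: DERIV_imp_deriv)
  have xdiff: "\<And>t. t \<in> I \<Longrightarrow> x1 differentiable at t \<and> x2 differentiable at t \<and> r differentiable at t"
    using dx1 dx2 rdiff(1) real_differentiable_def by blast
  have dA: "(A has_real_derivative R1 * R2 / A u) (at u)"
  proof -
    have "((\<lambda>t. sqrt (1 + (deriv r t)^2)) has_real_derivative
       inverse (sqrt (1 + (deriv r u)^2)) / 2 * (2 * deriv r u * deriv (deriv r) u)) (at u)"
      using rdiff(2)[OF u]
      by (auto intro!: derivative_eq_intros simp: DERIV_deriv_iff_real_differentiable[symmetric])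
        (use zero_le_power2[of "deriv r u"] in linarith)+
    then show ?thesis unfolding A_def[abs_def] R1_def R2_def by (simp add: field_simps)
  qed
  have dp: "(\<phi> has_real_derivative \<Phi>) (at u)" using dphi[OF u] unfolding \<Phi>_def .
  have X1d: "deriv (deriv x1) u = R1 * R2 / A u * cos (\<phi> u) - A u * sin (\<phi> u) * \<Phi>"
   and X1dd: "deriv x1 differentiable at u"
  proof -
    have "((\<lambda>t. A t * cos (\<phi> t)) has_real_derivative R1 * R2 / A u * cos (\<phi> u) - A u * sin (\<phi> u) * \<Phi>) (at u)"
      using dA dp by (auto intro!: derivative_eq_intros)
    then have "(deriv x1 has_real_derivative R1 * R2 / A u * cos (\<phi> u) - A u * sin (\<phi> u) * \<Phi>) (at u)"
      by (rule has_field_derivative_transform_within_open[OF _ I u]) (simp add: d1)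
    then show "deriv (deriv x1) u = R1 * R2 / A u * cos (\<phi> u) - A u * sin (\<phi> u) * \<Phi>"
      "deriv x1 differentiable at u" by (auto simp: DERIV_imp_deriv real_differentiable_def)
  qed
  have X2d: "deriv (deriv x2) u = R1 * R2 / A u * sin (\<phi> u) + A u * cos (\<phi> u) * \<Phi>"
   and X2dd: "deriv x2 differentiable at u"
  proof -
    have "((\<lambda>t. A t * sin (\<phi> t)) has_real_derivative R1 * R2 / A u * sin (\<phi> u) + A u * cos (\<phi> u) * \<Phi>) (at u)"
      using dA dp by (auto intro!: derivative_eq_intros)
    then have "(deriv x2 has_real_derivative R1 * R2 / A u * sin (\<phi> u) + A u * cos (\<phi> u) * \<Phi>) (at u)"
      by (rule has_field_derivative_transform_within_open[OF _ I u]) (simp add: d2)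
    then show "deriv (deriv x2) u = R1 * R2 / A u * sin (\<phi> u) + A u * cos (\<phi> u) * \<Phi>"
      "deriv x2 differentiable at u" by (auto simp: DERIV_imp_deriv real_differentiable_def)
  qed
  have E1: "\<And>t. t \<in> I \<Longrightarrow> (deriv x1 t)^2 + (deriv x2 t)^2 - (deriv r t)^2 = 1"
  proof -
    fix t assume t: "t \<in> I"
    have "(deriv x1 t)^2 + (deriv x2 t)^2 = (A t)^2"
      using d1[OF t] d2[OF t] sin_cos_squared_add[of "\<phi> t"] by algebra
    then show "(deriv x1 t)^2 + (deriv x2 t)^2 - (deriv r t)^2 = 1" using A2[of t] by simp
  qed
  have orth: "deriv x1 u * deriv (deriv x1) u + deriv x2 u * deriv (deriv x2) u - deriv r u * deriv (deriv r) u = 0"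
    by (rule orth_deriv[OF I u E1 X1dd X2dd rdiff(2)[OF u]])
  have W: "deriv x1 u * deriv (deriv x2) u - deriv (deriv x1) u * deriv x2 u = (A u)^2 * \<Phi>"
  proof -
    show ?thesis
      unfolding X1d X2d d1[OF u] d2[OF u] using sin_cos_squared_add[of "\<phi> u"] by algebra
  qed
  have Rp: "Rfun s C r u > 0" by (rule Rpos[OF u])
  have ru: "r u > 0" by (rule rpos[OF u])
  have pos1: "1 + (deriv r u)^2 \<noteq> 0" using zero_le_power2[of "deriv r u"] by linarith
  have eta2: "\<eta>^2 = 1" using eta by auto
  have Phi0: "\<Phi> \<noteq> 0" unfolding \<Phi>_def using Rp ru eta pos1 by auto
  have AP: "(A u)^2 * \<Phi> = \<eta> * sqrt (Rfun s C r u) / r u"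
    unfolding \<Phi>_def A2 using cancel_aux[OF pos1] .
  have W2: "(r u)^2 * ((A u)^2 * \<Phi>)^2 = Rfun s C r u"
    unfolding AP using Rp ru eta2
    by (simp add: power_divide power_mult_distrib real_sqrt_pow2)
  have curve: "vector_derivative (gen_curve x1 x2 r) (at u) = vector [deriv x1 u, deriv x2 u, deriv r u, 0]"
    unfolding gen_curve_def
    by (rule vector_derivative_at, rule has_vd_vec4)
       (use xdiff[OF u] in \<open>auto simp: DERIV_deriv_iff_real_differentiable\<close>)
  have part3: "lorentz_at (rot_surf x1 x2 r) u v \<and>
         nip (mean_curv (rot_surf x1 x2 r) u v) (mean_curv (rot_surf x1 x2 r) u v) = s * C^2" for v
  proof -
    note co = core[OF I u xdiff X1dd X2dd rdiff(2)[OF u] ru E1, of v]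
    define K where "K = nip (mean_curv (rot_surf x1 x2 r) u v) (mean_curv (rot_surf x1 x2 r) u v)"
    have KF: "K = ((deriv (deriv x1) u + deriv r u * deriv x1 u / r u)^2 + (deriv (deriv x2) u + deriv r u * deriv x2 u / r u)^2
      - (deriv (deriv r) u + (1 + (deriv r u)^2) / r u)^2) / 4" using co unfolding K_def by simp
    have e1: "(deriv x1 u)^2 + (deriv x2 u)^2 = 1 + (deriv r u)^2" using E1[OF u] by simp
    have o1: "deriv x1 u * deriv (deriv x1) u + deriv x2 u * deriv (deriv x2) u = deriv r u * deriv (deriv r) u"
      using orth by simp
    have KI: "4 * K * (r u)^2 * (1 + (deriv r u)^2) = (r u)^2 * (deriv x1 u * deriv (deriv x2) u - deriv (deriv x1) u * deriv x2 u)^2 - (r u * deriv (deriv r) u + (deriv r u)^2 + 1)^2"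
      unfolding KF by (rule key_identity[OF e1 o1 ru])
    then have KI: "4 * K * (r u)^2 * (1 + (deriv r u)^2) = (r u)^2 * ((A u)^2 * \<Phi>)^2 - (r u * deriv (deriv r) u + (deriv r u)^2 + 1)^2"
      unfolding W .
    then have "4 * K * (r u)^2 * (1 + (deriv r u)^2) = s * 4 * C^2 * (r u)^2 * (1 + (deriv r u)^2)"
      unfolding W2 Rfun_def by simp
    moreover have "(r u)^2 * (1 + (deriv r u)^2) \<noteq> 0" using ru pos1 by simp
    ultimately have "((r u)^2 * (1 + (deriv r u)^2)) * (4 * K) = ((r u)^2 * (1 + (deriv r u)^2)) * (4 * (s * C^2))"
      "(r u)^2 * (1 + (deriv r u)^2) \<noteq> 0" by (algebra, blast)
    then have "K = s * C^2" by (subst (asm) mult_left_cancel) simp_all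
    then show ?thesis using co K_def by simp
  qed
  show ?thesis
    using E1[OF u] W Phi0 part3 Apos[of u] unfolding curve by (simp add: power2_eq_square)
qed



lemma lift_alg:
  fixes A X1 X2 X1d X2d R1 R2 :: real
  assumes "A > 0" "X1^2+X2^2 = A^2" "X1*X1d+X2*X2d = R1*R2"
  shows "(X1d*A - X1*(R1*R2/A))/A^2 + (X2/A)*((X1*X2d - X1d*X2)/A^2) = 0"
    "(X2d*A - X2*(R1*R2/A))/A^2 - (X1/A)*((X1*X2d - X1d*X2)/A^2) = 0"
proof -
  have e1: "(X1d*A - X1*(R1*R2/A))/A^2 + (X2/A)*((X1*X2d - X1d*X2)/A^2)
     = (X1d*A^2 - X1*(R1*R2) + X2*(X1*X2d - X1d*X2))/A^3"
    using assms(1) by (simp add: field_simps power2_eq_square power3_eq_cube)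
  have "X1d*A^2 - X1*(R1*R2) + X2*(X1*X2d - X1d*X2) = 0"
    using assms(2,3) by algebra
  with e1 show "(X1d*A - X1*(R1*R2/A))/A^2 + (X2/A)*((X1*X2d - X1d*X2)/A^2) = 0" by simp
  have e2: "(X2d*A - X2*(R1*R2/A))/A^2 - (X1/A)*((X1*X2d - X1d*X2)/A^2)
     = (X2d*A^2 - X2*(R1*R2) - X1*(X1*X2d - X1d*X2))/A^3"
    using assms(1) by (simp add: field_simps power2_eq_square power3_eq_cube)
  have "X2d*A^2 - X2*(R1*R2) - X1*(X1*X2d - X1d*X2) = 0"
    using assms(2,3) by algebra
  with e2 show "(X2d*A - X2*(R1*R2/A))/A^2 - (X1/A)*((X1*X2d - X1d*X2)/A^2) = 0" by simp
qed

lemma diff_isCont: "f differentiable at x \<Longrightarrow> isCont f x"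
  for f :: "real \<Rightarrow> real"
  using DERIV_deriv_iff_real_differentiable DERIV_isCont by blast

lemma converse:
  fixes J I :: "real set" and r x1 x2 :: "real \<Rightarrow> real"
  assumes J: "open_interval J" and I: "open_interval I" and IJ: "I \<subseteq> J"
    and s1: "smooth_on x1 J" and s2: "smooth_on x2 J" and sr: "smooth_on r J"
    and rpos: "\<forall>u\<in>J. r u > 0"
    and E: "\<forall>u\<in>J. (deriv x1 u)^2 + (deriv x2 u)^2 - (deriv r u)^2 = 1"
    and Wn: "\<forall>u\<in>I. deriv x1 u * deriv (deriv x2) u - deriv (deriv x1) u * deriv x2 u \<noteq> 0"
    and K: "K \<noteq> 0" "\<forall>u\<in>I. \<forall>v\<in>{0..<2*pi}.
         nip (mean_curv (rot_surf x1 x2 r) u v) (mean_curv (rot_surf x1 x2 r) u v) = K"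
  shows "\<exists>C s \<eta> \<phi>. C \<noteq> 0 \<and> s \<in> {1, -1} \<and> \<eta> \<in> {1, -1} \<and>
         (\<forall>u\<in>I. Rfun s C r u > 0) \<and>
         (\<forall>u\<in>I. (\<phi> has_real_derivative
                 \<eta> * sqrt (Rfun s C r u) / (r u * (1 + (deriv r u)^2))) (at u)) \<and>
         (\<forall>u\<in>I. deriv x1 u = sqrt (1 + (deriv r u)^2) * cos (\<phi> u)) \<and>
         (\<forall>u\<in>I. deriv x2 u = sqrt (1 + (deriv r u)^2) * sin (\<phi> u))"
proof -
  have oJ: "open J" and oI: "open I" and iI: "is_interval I"
    using J I unfolding open_interval_def by auto
  define W where "W t = deriv x1 t * deriv (deriv x2) t - deriv (deriv x1) t * deriv x2 t" for t
  define A where "A t = sqrt (1 + (deriv r t)^2)" for t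
  define \<omega> where "\<omega> t = W t / (A t)^2" for t
  define s :: real where "s = (if K > 0 then 1 else -1)"
  define C where "C = sqrt \<bar>K\<bar>"
  have C0: "C \<noteq> 0" unfolding C_def using K(1) by simp
  have sC: "s * C^2 = K" unfolding s_def C_def by auto
  have s01: "s \<in> {1, -1}" unfolding s_def by auto
  have Apos: "A t > 0" for t unfolding A_def by (simp add: add_pos_nonneg)
  have A2: "(A t)^2 = 1 + (deriv r t)^2" for t unfolding A_def by (simp add: add_nonneg_nonneg)
  have dJ: "\<And>t. t \<in> J \<Longrightarrow> x1 differentiable at t \<and> x2 differentiable at t \<and> r differentiable at t"
    using smooth_D(1) s1 s2 sr by blast
  have ddJ: "\<And>t. t \<in> J \<Longrightarrow> deriv x1 differentiable at t \<and> deriv x2 differentiable at t \<and> deriv r differentiable at t"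
    using smooth_D(2) s1 s2 sr by blast
  have dddJ: "\<And>t. t \<in> J \<Longrightarrow> deriv (deriv x1) differentiable at t \<and> deriv (deriv x2) differentiable at t"
    using smooth_D(3) s1 s2 by blast
  have orth: "\<And>t. t \<in> J \<Longrightarrow> deriv x1 t * deriv (deriv x1) t + deriv x2 t * deriv (deriv x2) t = deriv r t * deriv (deriv r) t"
  proof -
    fix t assume t: "t \<in> J"
    show "deriv x1 t * deriv (deriv x1) t + deriv x2 t * deriv (deriv x2) t = deriv r t * deriv (deriv r) t"
      using orth_deriv[OF oJ t, of "deriv x1" "deriv x2" "deriv r"] E ddJ[OF t] by auto
  qed
  have e1: "\<And>t. t \<in> J \<Longrightarrow> (deriv x1 t)^2 + (deriv x2 t)^2 = (A t)^2"
    using E A2 by (simp add: algebra_simps)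
  have Rid: "Rfun s C r u = (r u)^2 * (W u)^2" if u: "u \<in> I" for u
  proof -
    have uJ: "u \<in> J" using u IJ by auto
    have ru: "r u > 0" using rpos uJ by auto
    have co: "nip (mean_curv (rot_surf x1 x2 r) u 0) (mean_curv (rot_surf x1 x2 r) u 0) =
     ((deriv (deriv x1) u + deriv r u * deriv x1 u / r u)^2 + (deriv (deriv x2) u + deriv r u * deriv x2 u / r u)^2
      - (deriv (deriv r) u + (1 + (deriv r u)^2) / r u)^2) / 4"
      using core[OF oJ uJ dJ, of 0] ddJ[OF uJ] ru E by auto
    have KF: "K = ((deriv (deriv x1) u + deriv r u * deriv x1 u / r u)^2 + (deriv (deriv x2) u + deriv r u * deriv x2 u / r u)^2
      - (deriv (deriv r) u + (1 + (deriv r u)^2) / r u)^2) / 4" using co K(2) u by auto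
    have e: "(deriv x1 u)^2 + (deriv x2 u)^2 = 1 + (deriv r u)^2" using E uJ by auto
    have KI: "4 * K * (r u)^2 * (1 + (deriv r u)^2) = (r u)^2 * (W u)^2 - (r u * deriv (deriv r) u + (deriv r u)^2 + 1)^2"
      unfolding KF W_def by (rule key_identity[OF e orth[OF uJ] ru])
    show ?thesis unfolding Rfun_def using KI sC by algebra
  qed
  have Rpos: "Rfun s C r u > 0" if "u \<in> I" for u
  proof -
    have "u \<in> J" using that IJ by auto
    then have "W u \<noteq> 0" "r u \<noteq> 0" using Wn that rpos unfolding W_def by auto
    then show ?thesis unfolding Rid[OF that] by simp
  qed
  have contW: "isCont W t" if "t \<in> J" for t
    unfolding W_def using ddJ[OF that] dddJ[OF that]
    by (intro continuous_intros diff_isCont) auto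
  have contA: "isCont A t" if "t \<in> J" for t
    unfolding A_def[abs_def] using ddJ[OF that]
    by (intro continuous_intros diff_isCont) auto
  have contw: "isCont \<omega> t" if "t \<in> J" for t
    unfolding \<omega>_def[abs_def] using contW[OF that] contA[OF that] Apos[of t]
    by (intro continuous_intros) auto
  obtain a b :: ereal where ab: "a < b" "\<And>x. x \<in> I \<longleftrightarrow> a < ereal x \<and> ereal x < b"
    using open_interval_ereal[OF I] by blast
  obtain F where F: "\<And>x. a < ereal x \<Longrightarrow> ereal x < b \<Longrightarrow> (F has_vector_derivative \<omega> x) (at x)"
    using einterval_antiderivative[OF ab(1), of \<omega>] contw ab(2) IJ by blast
  have dF: "(F has_real_derivative \<omega> x) (at x)" if "x \<in> I" for x
    using F ab(2) that by (simp add: has_real_derivative_iff_has_vector_derivative)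
  obtain u0 where u0: "u0 \<in> I" using I unfolding open_interval_def by auto
  have u0J: "u0 \<in> J" using u0 IJ by auto
  define c where "c t = deriv x1 t / A t" for t
  define d where "d t = deriv x2 t / A t" for t
  have cd1: "(c t)^2 + (d t)^2 = 1" if "t \<in> J" for t
    unfolding c_def d_def using e1[OF that] Apos[of t] by (simp add: power_divide add_divide_distrib[symmetric])
  obtain \<theta>0 where th: "c u0 = cos \<theta>0" "d u0 = sin \<theta>0"
    using sincos_total_2pi[OF cd1[OF u0J]] by blast
  define \<phi> where "\<phi> t = F t - F u0 + \<theta>0" for t
  have dphi: "(\<phi> has_real_derivative \<omega> x) (at x)" if "x \<in> I" for x
    unfolding \<phi>_def[abs_def] using dF[OF that] by (auto intro!: derivative_eq_intros)
  define h where "h t = c t * cos (\<phi> t) + d t * sin (\<phi> t)" for t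
  have dh: "(h has_real_derivative 0) (at x)" if x: "x \<in> I" for x
  proof -
    have xJ: "x \<in> J" using x IJ by auto
    define R1 where "R1 = deriv r x"
    define R2 where "R2 = deriv (deriv r) x"
    have dA: "(A has_real_derivative R1 * R2 / A x) (at x)"
    proof -
      have "((\<lambda>t. sqrt (1 + (deriv r t)^2)) has_real_derivative
         inverse (sqrt (1 + (deriv r x)^2)) / 2 * (2 * deriv r x * deriv (deriv r) x)) (at x)"
        using ddJ[OF xJ]
        by (auto intro!: derivative_eq_intros simp: DERIV_deriv_iff_real_differentiable[symmetric])
          (use zero_le_power2[of "deriv r x"] in linarith)+
      then show ?thesis unfolding A_def[abs_def] R1_def R2_def by (simp add: field_simps)
    qed
    have dx1: "(deriv x1 has_real_derivative deriv (deriv x1) x) (at x)"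
      using ddJ[OF xJ] DERIV_deriv_iff_real_differentiable by blast
    have dx2: "(deriv x2 has_real_derivative deriv (deriv x2) x) (at x)"
      using ddJ[OF xJ] DERIV_deriv_iff_real_differentiable by blast
    have Ax: "A x \<noteq> 0" using Apos[of x] by simp
    have dc: "(c has_real_derivative (deriv (deriv x1) x * A x - deriv x1 x * (R1 * R2 / A x)) / (A x)^2) (at x)"
      unfolding c_def[abs_def] using dx1 dA Ax
      by (auto intro!: derivative_eq_intros simp: power2_eq_square)
    have dd: "(d has_real_derivative (deriv (deriv x2) x * A x - deriv x2 x * (R1 * R2 / A x)) / (A x)^2) (at x)"
      unfolding d_def[abs_def] using dx2 dA Ax
      by (auto intro!: derivative_eq_intros simp: power2_eq_square)
    have L: "(deriv (deriv x1) x * A x - deriv x1 x * (R1 * R2 / A x)) / (A x)^2 + d x * \<omega> x = 0"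
      "(deriv (deriv x2) x * A x - deriv x2 x * (R1 * R2 / A x)) / (A x)^2 - c x * \<omega> x = 0"
      using lift_alg[OF Apos[of x] e1[OF xJ] orth[OF xJ, folded R1_def R2_def]]
      unfolding c_def d_def \<omega>_def W_def by auto
    have "(h has_real_derivative
       ((deriv (deriv x1) x * A x - deriv x1 x * (R1 * R2 / A x)) / (A x)^2 + d x * \<omega> x) * cos (\<phi> x)
      + ((deriv (deriv x2) x * A x - deriv x2 x * (R1 * R2 / A x)) / (A x)^2 - c x * \<omega> x) * sin (\<phi> x)) (at x)"
      unfolding h_def[abs_def] using dc dd dphi[OF x]
      by (auto intro!: derivative_eq_intros simp: algebra_simps)
    then show ?thesis unfolding L by simp
  qed
  obtain hc where hc: "\<And>x. x \<in> I \<Longrightarrow> h x = hc"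
    using has_field_derivative_zero_constant[of I h] is_interval_convex[OF iI] dh
      has_field_derivative_at_within by blast
  have h1: "h u0 = 1" unfolding h_def \<phi>_def using th cd1[OF u0J] by (simp add: power2_eq_square)
  have cs: "c x = cos (\<phi> x) \<and> d x = sin (\<phi> x)" if x: "x \<in> I" for x
  proof -
    have xJ: "x \<in> J" using x IJ by auto
    have "h x = 1" using hc[OF x] hc[OF u0] h1 by simp
    then have "(c x - cos (\<phi> x))^2 + (d x - sin (\<phi> x))^2 = 0"
      using cd1[OF xJ] sin_cos_squared_add[of "\<phi> x"] unfolding h_def by algebra
    then show ?thesis by (simp add: sum_power2_eq_zero_iff)
  qed
  define \<eta> where "\<eta> = sgn (W u0)"
  have contWI: "continuous_on I W" using contW IJ by (auto intro!: continuous_at_imp_continuous_on)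
  have sg: "sgn (W u) = \<eta>" if "u \<in> I" for u
    unfolding \<eta>_def by (rule sign_const[OF iI contWI _ u0 that]) (use Wn W_def in auto)
  have eta01: "\<eta> \<in> {1, -1}" unfolding \<eta>_def using Wn u0 W_def by (auto simp: sgn_real_def)
  show ?thesis
  proof (intro exI conjI ballI)
    show "C \<noteq> 0" by (rule C0)
    show "s \<in> {1, -1}" by (rule s01)
    show "\<eta> \<in> {1, -1}" by (rule eta01)
    fix u assume u: "u \<in> I"
    have uJ: "u \<in> J" using u IJ by auto
    show "Rfun s C r u > 0" by (rule Rpos[OF u])
    show "deriv x1 u = sqrt (1 + (deriv r u)^2) * cos (\<phi> u)"
      using cs[OF u] Apos[of u] unfolding c_def A_def[symmetric] by (simp add: field_simps)
    show "deriv x2 u = sqrt (1 + (deriv r u)^2) * sin (\<phi> u)"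
      using cs[OF u] Apos[of u] unfolding d_def A_def[symmetric] by (simp add: field_simps)
    have ru: "r u > 0" using rpos uJ by auto
    have sq: "sqrt (Rfun s C r u) = r u * \<bar>W u\<bar>"
      unfolding Rid[OF u] using ru by (simp add: real_sqrt_mult)
    have "\<eta> * \<bar>W u\<bar> = W u" using sg[OF u] by (metis sgn_mult_abs)
    then have e2: "\<eta> * (r u * \<bar>W u\<bar>) = r u * W u" by (metis mult.left_commute)
    have "\<eta> * sqrt (Rfun s C r u) / (r u * (1 + (deriv r u)^2)) = W u / (1 + (deriv r u)^2)"
      unfolding sq e2 using ru by simp
    then have "\<omega> u = \<eta> * sqrt (Rfun s C r u) / (r u * (1 + (deriv r u)^2))"
      unfolding \<omega>_def A2 by simp
    then show "(\<phi> has_real_derivative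
                 \<eta> * sqrt (Rfun s C r u) / (r u * (1 + (deriv r u)^2))) (at u)"
      using dphi[OF u] by simp
  qed
qed


theorem theorem3p1:
  shows
  "(\<forall>(I::real set) (r::real\<Rightarrow>real) (C::real) (\<eta>::real) (s::real) (\<phi>::real\<Rightarrow>real)
       (x1::real\<Rightarrow>real) (x2::real\<Rightarrow>real).
      open_interval I \<and> smooth_on r I \<and> (\<forall>u\<in>I. r u > 0) \<and> C \<noteq> 0 \<and>
      \<eta> \<in> {1, -1} \<and> s \<in> {1, -1} \<and> (\<forall>u\<in>I. Rfun s C r u > 0) \<and>
      (\<forall>u\<in>I. (\<phi> has_real_derivative
                 \<eta> * sqrt (Rfun s C r u) / (r u * (1 + (deriv r u)^2))) (at u)) \<and>
      (\<forall>u\<in>I. (x1 has_real_derivative sqrt (1 + (deriv r u)^2) * cos (\<phi> u)) (at u)) \<and>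
      (\<forall>u\<in>I. (x2 has_real_derivative sqrt (1 + (deriv r u)^2) * sin (\<phi> u)) (at u))
    \<longrightarrow>
      (\<forall>u\<in>I.
         nip (vector_derivative (gen_curve x1 x2 r) (at u))
             (vector_derivative (gen_curve x1 x2 r) (at u)) > 0 \<and>
         nip (vector_derivative (gen_curve x1 x2 r) (at u))
             (vector_derivative (gen_curve x1 x2 r) (at u)) = 1 \<and>
         deriv x1 u * deriv (deriv x2) u - deriv (deriv x1) u * deriv x2 u \<noteq> 0) \<and>
      (\<forall>u\<in>I. \<forall>v. lorentz_at (rot_surf x1 x2 r) u v \<and>
         nip (mean_curv (rot_surf x1 x2 r) u v) (mean_curv (rot_surf x1 x2 r) u v) = s * C^2))
   \<and>
   (\<forall>(J::real set) (I::real set) (r::real\<Rightarrow>real) (x1::real\<Rightarrow>real) (x2::real\<Rightarrow>real).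
      open_interval J \<and> open_interval I \<and> I \<subseteq> J \<and>
      smooth_on x1 J \<and> smooth_on x2 J \<and> smooth_on r J \<and> (\<forall>u\<in>J. r u > 0) \<and>
      (\<forall>u\<in>J. (deriv x1 u)^2 + (deriv x2 u)^2 - (deriv r u)^2 = 1) \<and>
      (\<forall>u\<in>I. deriv x1 u * deriv (deriv x2) u - deriv (deriv x1) u * deriv x2 u \<noteq> 0) \<and>
      (\<exists>K. K \<noteq> 0 \<and> (\<forall>u\<in>I. \<forall>v\<in>{0..<2*pi}.
         nip (mean_curv (rot_surf x1 x2 r) u v) (mean_curv (rot_surf x1 x2 r) u v) = K))
    \<longrightarrow>
      (\<exists>C s \<eta> \<phi>. C \<noteq> 0 \<and> s \<in> {1, -1} \<and> \<eta> \<in> {1, -1} \<and>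
         (\<forall>u\<in>I. Rfun s C r u > 0) \<and>
         (\<forall>u\<in>I. (\<phi> has_real_derivative
                 \<eta> * sqrt (Rfun s C r u) / (r u * (1 + (deriv r u)^2))) (at u)) \<and>
         (\<forall>u\<in>I. deriv x1 u = sqrt (1 + (deriv r u)^2) * cos (\<phi> u)) \<and>
         (\<forall>u\<in>I. deriv x2 u = sqrt (1 + (deriv r u)^2) * sin (\<phi> u))))"
proof (intro conjI allI impI)
  fix I r C \<eta> s \<phi> x1 x2
  assume H: "open_interval I \<and> smooth_on r I \<and> (\<forall>u\<in>I. r u > 0) \<and> C \<noteq> 0 \<and>
      \<eta> \<in> {1, -1} \<and> s \<in> {1, -1} \<and> (\<forall>u\<in>I. Rfun s C r u > 0) \<and>
      (\<forall>u\<in>I. (\<phi> has_real_derivative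
                 \<eta> * sqrt (Rfun s C r u) / (r u * (1 + (deriv r u)^2))) (at u)) \<and>
      (\<forall>u\<in>I. (x1 has_real_derivative sqrt (1 + (deriv r u)^2) * cos (\<phi> u)) (at u)) \<and>
      (\<forall>u\<in>I. (x2 has_real_derivative sqrt (1 + (deriv r u)^2) * sin (\<phi> u)) (at u))"
  then have oI: "open I" unfolding open_interval_def by auto
  have P: "\<And>u. u \<in> I \<Longrightarrow> nip (vector_derivative (gen_curve x1 x2 r) (at u))
             (vector_derivative (gen_curve x1 x2 r) (at u)) = 1 \<and>
         deriv x1 u * deriv (deriv x2) u - deriv (deriv x1) u * deriv x2 u \<noteq> 0 \<and>
         (\<forall>v. lorentz_at (rot_surf x1 x2 r) u v \<and>
         nip (mean_curv (rot_surf x1 x2 r) u v) (mean_curv (rot_surf x1 x2 r) u v) = s * C^2)"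
    by (rule forward_pt[OF oI]) (use H in auto)
  show "\<forall>u\<in>I.
         nip (vector_derivative (gen_curve x1 x2 r) (at u))
             (vector_derivative (gen_curve x1 x2 r) (at u)) > 0 \<and>
         nip (vector_derivative (gen_curve x1 x2 r) (at u))
             (vector_derivative (gen_curve x1 x2 r) (at u)) = 1 \<and>
         deriv x1 u * deriv (deriv x2) u - deriv (deriv x1) u * deriv x2 u \<noteq> 0"
    using P by auto
  show "\<forall>u\<in>I. \<forall>v. lorentz_at (rot_surf x1 x2 r) u v \<and>
         nip (mean_curv (rot_surf x1 x2 r) u v) (mean_curv (rot_surf x1 x2 r) u v) = s * C^2"
    using P by auto
next
  fix J I :: "real set" and r x1 x2 :: "real \<Rightarrow> real"
  assume H: "open_interval J \<and> open_interval I \<and> I \<subseteq> J \<and>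
      smooth_on x1 J \<and> smooth_on x2 J \<and> smooth_on r J \<and> (\<forall>u\<in>J. r u > 0) \<and>
      (\<forall>u\<in>J. (deriv x1 u)^2 + (deriv x2 u)^2 - (deriv r u)^2 = 1) \<and>
      (\<forall>u\<in>I. deriv x1 u * deriv (deriv x2) u - deriv (deriv x1) u * deriv x2 u \<noteq> 0) \<and>
      (\<exists>K. K \<noteq> 0 \<and> (\<forall>u\<in>I. \<forall>v\<in>{0..<2*pi}.
         nip (mean_curv (rot_surf x1 x2 r) u v) (mean_curv (rot_surf x1 x2 r) u v) = K))"
  then obtain K where K: "K \<noteq> 0" "\<forall>u\<in>I. \<forall>v\<in>{0..<2*pi}.
         nip (mean_curv (rot_surf x1 x2 r) u v) (mean_curv (rot_surf x1 x2 r) u v) = K" by blast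
  show "\<exists>C s \<eta> \<phi>. C \<noteq> 0 \<and> s \<in> {1, -1} \<and> \<eta> \<in> {1, -1} \<and>
         (\<forall>u\<in>I. Rfun s C r u > 0) \<and>
         (\<forall>u\<in>I. (\<phi> has_real_derivative
                 \<eta> * sqrt (Rfun s C r u) / (r u * (1 + (deriv r u)^2))) (at u)) \<and>
         (\<forall>u\<in>I. deriv x1 u = sqrt (1 + (deriv r u)^2) * cos (\<phi> u)) \<and>
         (\<forall>u\<in>I. deriv x2 u = sqrt (1 + (deriv r u)^2) * sin (\<phi> u))"
    by (rule converse[of J I x1 x2 r K]) (use H K in auto)
qed

end
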